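(* For any utility profile $\mathbf{u}$, the game $G=(\mathcal{L},R^L,\mathbf{u})$ has the following properties: (1) If $\mathbf{b}$ is a PNE of $G$ then $|W(\mathbf{b})|\in\{1,m\}$. Moreover, $|W(\mathbf{b})|=m$ if and only if $\mathbf{b}$ is the trivial ballot vector and all voters rank $c_1$ first. (2) If $\mathbf{b}$ is a PNE of $G$ then there exists at most one voter $i$ with $b_i\neq\bot$. (3) $G$ admits a PNE if and only if all voters rank $c_1$ first (in which case $c_1$ is the unique PNE winner) or there exists a candidate $c_j$ with $j>1$ such that (i) $\mathrm{sc}(c_j,\mathbf{a})>0$ and (ii) for every $k<j$, all voters prefer $c_j$ to $c_k$. If such a candidate exists, he is unique, and wins in all PNE of $G$.
   Context: Let $C=\{c_1,\dots,c_m\}$ be a set of candidates and $N=\{1,\dots,n\}$ a set of voters. Each voter $i$ has an injective utility function $u_i:C\to\mathbb{N}$; $\mathbf{u}=(u_1,\dots,u_n)$. Voter $i$'s preference $\succ_i$ is $c\succ_i c'$ iff $u_i(c)>u_i(c')$; $a_i$ is $i$'s top candidate and $\mathbf{a}=(a_1,\dots,a_n)$ is the truthful ballot vector. A ballot vector is $\mathbf{b}=(b_1,\dots,b_n)$ with $b_i\in C\cup\{\bot\}$ ($\bot$ = abstain); it is trivial if all $b_i=\bot$. $(\mathbf{b}_{-i},b')$ denotes $\mathbf{b}$ with $b_i$ replaced by $b'$. The score is $\mathrm{sc}(c,\mathbf{b})=|\{i:b_i=c\}|$, $M(\mathbf{b})=\max_{c}\mathrm{sc}(c,\mathbf{b})$,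 and $W(\mathbf{b})=\{c:\mathrm{sc}(c,\mathbf{b})=M(\mathbf{b})\}$ (so $W(\mathbf{b})=C$ for the trivial ballot). Under the lexicographic tie-breaking rule $R^L$, the winner is the $c_j\in W(\mathbf{b})$ with smallest index $j$. Fix $0<\varepsilon<\min\{1/m,1/n\}$. In the lazy setting $\mathcal{L}$, if $c$ is the winner of $\mathbf{b}$, voter $i$'s utility is $U_i(\mathbf{b})=u_i(c)$ if $b_i\in C$ and $u_i(c)+\varepsilon$ if $b_i=\bot$. The game $(\mathcal{L},R^L,\mathbf{u})$ has players $N$, action set $C\cup\{\bot\}$ for each. A ballot vector $\mathbf{b}$ is a pure Nash equilibrium (PNE) if $U_i(\mathbf{b})\ge U_i(\mathbf{b}_{-i},b')$ for all $i\in N$ and all $b'\in C\cup\{\bot\}$. *)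

theory Defs
  imports Complex_Main
begin

text \<open>Candidates are the indices 1..m (index j stands for c_j), voters are 1..n.  A ballot vector is
  b :: voter => candidate option, where None stands for abstention.\<close>

definition cands :: "nat \<Rightarrow> nat set" where
  "cands m = {1..m}"

definition voters :: "nat \<Rightarrow> nat set" where
  "voters n = {1..n}"

definition valid_profile :: "nat \<Rightarrow> nat \<Rightarrow> (nat \<Rightarrow> nat \<Rightarrow> nat) \<Rightarrow> bool" where
  "valid_profile m n u \<longleftrightarrow> (\<forall>i\<in>voters n. inj_on (u i) (cands m))"

definition valid_ballot :: "nat \<Rightarrow> nat \<Rightarrow> (nat \<Rightarrow> nat option) \<Rightarrow> bool" where
  "valid_ballot m n b \<longleftrightarrow> (\<forall>i\<in>voters n. \<forall>c. b i = Some c \<longrightarrow> c \<in> cands m)"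

definition actions :: "nat \<Rightarrow> nat option set" where
  "actions m = insert None (Some ` cands m)"

definition top :: "nat \<Rightarrow> (nat \<Rightarrow> nat \<Rightarrow> nat) \<Rightarrow> nat \<Rightarrow> nat" where
  "top m u i = (THE c. c \<in> cands m \<and> (\<forall>c'\<in>cands m. c' \<noteq> c \<longrightarrow> u i c' < u i c))"

definition truthful :: "nat \<Rightarrow> (nat \<Rightarrow> nat \<Rightarrow> nat) \<Rightarrow> nat \<Rightarrow> nat option" where
  "truthful m u i = Some (top m u i)"

definition sc :: "nat \<Rightarrow> nat \<Rightarrow> (nat \<Rightarrow> nat option) \<Rightarrow> nat" where
  "sc n c b = card {i \<in> voters n. b i = Some c}"

definition maxsc :: "nat \<Rightarrow> nat \<Rightarrow> (nat \<Rightarrow> nat option) \<Rightarrow> nat" where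
  "maxsc m n b = Max ((\<lambda>c. sc n c b) ` cands m)"

definition W :: "nat \<Rightarrow> nat \<Rightarrow> (nat \<Rightarrow> nat option) \<Rightarrow> nat set" where
  "W m n b = {c \<in> cands m. sc n c b = maxsc m n b}"

definition winner :: "nat \<Rightarrow> nat \<Rightarrow> (nat \<Rightarrow> nat option) \<Rightarrow> nat" where
  "winner m n b = Min (W m n b)"

definition trivial_ballot :: "nat \<Rightarrow> (nat \<Rightarrow> nat option) \<Rightarrow> bool" where
  "trivial_ballot n b \<longleftrightarrow> (\<forall>i\<in>voters n. b i = None)"

definition Ut :: "nat \<Rightarrow> nat \<Rightarrow> (nat \<Rightarrow> nat \<Rightarrow> nat) \<Rightarrow> real \<Rightarrow> nat \<Rightarrow> (nat \<Rightarrow> nat option) \<Rightarrow> real" where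
  "Ut m n u eps i b = real (u i (winner m n b)) + (if b i = None then eps else 0)"

definition PNE :: "nat \<Rightarrow> nat \<Rightarrow> (nat \<Rightarrow> nat \<Rightarrow> nat) \<Rightarrow> real \<Rightarrow> (nat \<Rightarrow> nat option) \<Rightarrow> bool" where
  "PNE m n u eps b \<longleftrightarrow> valid_ballot m n b \<and>
     (\<forall>i\<in>voters n. \<forall>b'\<in>actions m. Ut m n u eps i b \<ge> Ut m n u eps i (b(i := b')))"

definition good_cand :: "nat \<Rightarrow> nat \<Rightarrow> (nat \<Rightarrow> nat \<Rightarrow> nat) \<Rightarrow> nat \<Rightarrow> bool" where
  "good_cand m n u j \<longleftrightarrow> j \<in> cands m \<and> 1 < j \<and> sc n j (truthful m u) > 0 \<and>
     (\<forall>k\<in>cands m. k < j \<longrightarrow> (\<forall>i\<in>voters n. u i j > u i k))"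

end

theory Submission
  imports Defs
begin

lemma fin_v[simp]: "finite (voters n)" by (simp add: voters_def)
lemma fin_c[simp]: "finite (cands m)" by (simp add: cands_def)

lemma sc_upd:
  assumes "i \<in> voters n"
  shows "sc n d (b(i:=x)) = sc n d b - (if b i = Some d then 1 else 0) + (if x = Some d then 1 else 0)"
proof -
  let ?S = "{k \<in> voters n. b k = Some d}"
  have fS: "finite ?S" by simp
  show ?thesis
  proof (cases "b i = Some d")
    case True
    note T = True
    show ?thesis
    proof (cases "x = Some d")
      case True
      have "{k \<in> voters n. (b(i:=x)) k = Some d} = ?S" using T True assms by auto
      moreover have "card ?S \<ge> 1" using T assms fS
        by (metis (mono_tags, lifting) One_nat_def Suc_leI card_gt_0_iff empty_iff mem_Collect_eq)
      ultimately show ?thesis using T True by (simp add: sc_def)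
    next
      case False
      have "{k \<in> voters n. (b(i:=x)) k = Some d} = ?S - {i}" using T False assms by auto
      then show ?thesis using T False assms fS by (simp add: sc_def)
    qed
  next
    case F: False
    show ?thesis
    proof (cases "x = Some d")
      case True
      have "{k \<in> voters n. (b(i:=x)) k = Some d} = insert i ?S" using F True assms by auto
      moreover have "i \<notin> ?S" using F by auto
      ultimately show ?thesis using F True fS by (simp add: sc_def)
    next
      case False
      have "{k \<in> voters n. (b(i:=x)) k = Some d} = ?S" using F False assms by auto
      then show ?thesis using F False by (simp add: sc_def)
    qed
  qed
qed

lemma sc_cong: "(\<forall>i\<in>voters n. b i = b' i) \<Longrightarrow> sc n d b = sc n d b'"
  unfolding sc_def by (metis (mono_tags, lifting) Collect_cong)

lemma sc_single: "i0 \<in> voters n \<Longrightarrow> (\<forall>i\<in>voters n. b i = (if i = i0 then Some j else None))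
   \<Longrightarrow> sc n d b = (if d = j then 1 else 0)"
proof -
  assume a: "i0 \<in> voters n" "\<forall>i\<in>voters n. b i = (if i = i0 then Some j else None)"
  have "{k \<in> voters n. b k = Some d} = (if d = j then {i0} else {})" using a by (auto split: if_splits)
  then show ?thesis by (simp add: sc_def)
qed

lemma sc_none: "(\<forall>i\<in>voters n. b i = None) \<Longrightarrow> sc n d b = 0"
  unfolding sc_def by simp

lemma winner_char:
  assumes "m \<ge> 1"
  shows "winner m n b \<in> cands m \<and> (\<forall>d\<in>cands m. sc n d b \<le> sc n (winner m n b) b)
     \<and> (\<forall>d\<in>cands m. d < winner m n b \<longrightarrow> sc n d b < sc n (winner m n b) b)"
proof -
  have ne: "cands m \<noteq> {}" using assms by (auto simp: cands_def)
  have mx: "maxsc m n b \<in> (\<lambda>c. sc n c b) ` cands m" unfolding maxsc_def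
    using ne by (intro Max_in) auto
  have le: "\<And>d. d \<in> cands m \<Longrightarrow> sc n d b \<le> maxsc m n b" unfolding maxsc_def
    by (intro Max_ge) auto
  have Wne: "W m n b \<noteq> {}" using mx unfolding W_def by auto
  have fW: "finite (W m n b)" unfolding W_def by simp
  have wW: "winner m n b \<in> W m n b" unfolding winner_def using Wne fW by (intro Min_in)
  have wmin: "\<And>d. d \<in> W m n b \<Longrightarrow> winner m n b \<le> d" unfolding winner_def using fW by (intro Min_le)
  have wC: "winner m n b \<in> cands m" and ws: "sc n (winner m n b) b = maxsc m n b" using wW unfolding W_def by auto
  show ?thesis
  proof (intro conjI ballI impI)
    show "winner m n b \<in> cands m" by fact
  next
    fix d assume "d \<in> cands m" then show "sc n d b \<le> sc n (winner m n b) b" using le ws by simp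
  next
    fix d assume d: "d \<in> cands m" "d < winner m n b"
    have "d \<notin> W m n b"
    proof
      assume "d \<in> W m n b"
      then have "winner m n b \<le> d" by (rule wmin)
      with d show False by simp
    qed
    then have "sc n d b \<noteq> maxsc m n b" using d unfolding W_def by auto
    then show "sc n d b < sc n (winner m n b) b" using le[OF d(1)] ws by simp
  qed
qed

lemma winner_D:
  assumes "m \<ge> 1" "c \<in> cands m" "\<forall>d\<in>cands m. sc n d b \<le> sc n c b"
    "\<forall>d\<in>cands m. d < c \<longrightarrow> sc n d b < sc n c b"
  shows "winner m n b = c"
proof -
  note w = winner_char[OF assms(1), of n b]
  show ?thesis
  proof (rule ccontr)
    assume "winner m n b \<noteq> c"
    then have "winner m n b < c \<or> c < winner m n b" by linarith
    then show False
    proof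
      assume l: "winner m n b < c"
      have "sc n (winner m n b) b < sc n c b" using assms(4) w l by blast
      moreover have "sc n c b \<le> sc n (winner m n b) b" using w assms(2) by blast
      ultimately show False by simp
    next
      assume l: "c < winner m n b"
      have "sc n c b < sc n (winner m n b) b" using assms(2) w l by blast
      moreover have "sc n (winner m n b) b \<le> sc n c b" using w assms(3) by blast
      ultimately show False by simp
    qed
  qed
qed

lemma W_single:
  assumes "c \<in> cands m" "\<forall>d\<in>cands m. d \<noteq> c \<longrightarrow> sc n d b < sc n c b"
  shows "W m n b = {c}"
proof -
  have "maxsc m n b = sc n c b" unfolding maxsc_def
    using assms by (intro Max_eqI) (auto simp: less_imp_le)
  then show ?thesis unfolding W_def using assms(1) assms(2) by (auto simp: less_irrefl)
qed

lemma W_triv: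
  assumes "m \<ge> 1" "\<forall>i\<in>voters n. b i = None"
  shows "W m n b = cands m"
proof -
  have ne: "cands m \<noteq> {}" using assms by (auto simp: cands_def)
  have "(\<lambda>c. sc n c b) ` cands m = {0}" using ne sc_none[OF assms(2)] by auto
  then have "maxsc m n b = 0" by (simp add: maxsc_def)
  then show ?thesis unfolding W_def using sc_none[OF assms(2)] by auto
qed

lemma top_char:
  assumes "m \<ge> 1" "inj_on (u i) (cands m)"
  shows "top m u i \<in> cands m \<and> (\<forall>c'\<in>cands m. c' \<noteq> top m u i \<longrightarrow> u i c' < u i (top m u i))"
proof -
  have ne: "cands m \<noteq> {}" using assms by (auto simp: cands_def)
  obtain c where c: "c \<in> cands m" "u i c = Max (u i ` cands m)"
    using Max_in[of "u i ` cands m"] ne by (metis fin_c finite_imageI image_iff image_is_empty)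
  have P: "c \<in> cands m \<and> (\<forall>c'\<in>cands m. c' \<noteq> c \<longrightarrow> u i c' < u i c)"
  proof (intro conjI ballI impI)
    fix c' assume c': "c' \<in> cands m" "c' \<noteq> c"
    have "u i c' \<le> u i c" using c c' by simp
    moreover have "u i c' \<noteq> u i c" using assms(2) c c' by (meson inj_onD)
    ultimately show "u i c' < u i c" by simp
  qed (use c in auto)
  have "\<exists>!c. c \<in> cands m \<and> (\<forall>c'\<in>cands m. c' \<noteq> c \<longrightarrow> u i c' < u i c)"
  proof (rule ex1I[of _ c])
    show "c \<in> cands m \<and> (\<forall>c'\<in>cands m. c' \<noteq> c \<longrightarrow> u i c' < u i c)" by (rule P)
  next
    fix y assume y: "y \<in> cands m \<and> (\<forall>c'\<in>cands m. c' \<noteq> y \<longrightarrow> u i c' < u i y)"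
    show "y = c"
    proof (rule ccontr)
      assume "y \<noteq> c"
      then have "u i c < u i y" using y P by auto
      moreover have "u i y < u i c" using y P \<open>y \<noteq> c\<close> by auto
      ultimately show False by simp
    qed
  qed
  then show ?thesis unfolding top_def by (rule theI')
qed


lemma Ut_eq: "Ut m n u eps i b = real (u i (winner m n b)) + (if b i = None then eps else 0)"
  by (simp add: Ut_def)

lemma nat_eps: "(eps::real) < 1 \<Longrightarrow> real (x::nat) \<le> real y + eps \<Longrightarrow> x \<le> y"
proof -
  assume "eps < 1" "real x \<le> real y + eps"
  then have "real x < real (y + 1)" by simp
  then show "x \<le> y" by linarith
qed

context
  fixes m n :: nat and u :: "nat \<Rightarrow> nat \<Rightarrow> nat" and eps :: real
  assumes m1: "m \<ge> 1" and vp: "valid_profile m n u" and eps0: "0 < eps" and eps1: "eps < 1"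
begin

lemma topc: "i \<in> voters n \<Longrightarrow> top m u i \<in> cands m \<and> (\<forall>c'\<in>cands m. c' \<noteq> top m u i \<longrightarrow> u i c' < u i (top m u i))"
  using top_char[OF m1] vp unfolding valid_profile_def by blast

lemma injc: "i \<in> voters n \<Longrightarrow> c \<in> cands m \<Longrightarrow> d \<in> cands m \<Longrightarrow> c \<noteq> d \<Longrightarrow> u i c \<noteq> u i d"
  using vp unfolding valid_profile_def by (meson inj_onD)

lemma dev: "PNE m n u eps b \<Longrightarrow> i \<in> voters n \<Longrightarrow> x \<in> actions m \<Longrightarrow>
   Ut m n u eps i (b(i:=x)) \<le> Ut m n u eps i b"
  unfolding PNE_def by blast

lemma actNone: "None \<in> actions m" by (simp add: actions_def)
lemma actSome: "c \<in> cands m \<Longrightarrow> Some c \<in> actions m" by (simp add: actions_def)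

lemma one_c: "1 \<in> cands m" using m1 by (simp add: cands_def)

lemma single_winner:
  assumes "i0 \<in> voters n" "j \<in> cands m" "\<forall>i\<in>voters n. b i = (if i = i0 then Some j else None)"
  shows "winner m n b = j \<and> W m n b = {j}"
proof -
  have s: "\<And>d. sc n d b = (if d = j then 1 else 0)" using sc_single assms(1,3) by blast
  show ?thesis
  proof
    show "winner m n b = j" by (rule winner_D[OF m1 assms(2)]) (auto simp: s)
    show "W m n b = {j}" by (rule W_single[OF assms(2)]) (auto simp: s)
  qed
qed

lemma triv_winner:
  assumes "\<forall>i\<in>voters n. b i = None"
  shows "winner m n b = 1 \<and> W m n b = cands m"
proof
  show "winner m n b = 1" by (rule winner_D[OF m1 one_c]) (auto simp: sc_none[OF assms] cands_def)
  show "W m n b = cands m" by (rule W_triv[OF m1 assms])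
qed

lemma pair_winner:
  assumes "i0 \<in> voters n" "i1 \<in> voters n" "i0 \<noteq> i1" "j \<in> cands m" "c \<in> cands m"
    "\<forall>i\<in>voters n. b i = (if i = i0 then Some j else if i = i1 then Some c else None)"
  shows "winner m n b = min j c"
proof -
  let ?s = "\<lambda>i. if i = i0 then Some j else None"
  have e: "\<forall>i\<in>voters n. b i = (?s(i1 := Some c)) i" using assms(3,6) by auto
  have s: "\<And>d. sc n d b = (if d = j then 1 else 0) + (if d = c then 1 else 0)"
  proof -
    fix d
    have "sc n d b = sc n d (?s(i1 := Some c))" by (rule sc_cong[OF e])
    also have "\<dots> = sc n d ?s - (if ?s i1 = Some d then 1 else 0) + (if Some c = Some d then 1 else 0)"
      by (rule sc_upd[OF assms(2)])
    also have "sc n d ?s = (if d = j then 1 else 0)" by (rule sc_single[OF assms(1)]) simp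
    finally show "sc n d b = (if d = j then 1 else 0) + (if d = c then 1 else 0)" using assms(3) by auto
  qed
  have mc: "min j c \<in> cands m" using assms(4,5) by (simp add: min_def)
  show ?thesis by (rule winner_D[OF m1 mc]) (auto simp: s min_def)
qed


lemma master:
  assumes P: "PNE m n u eps b"
  shows "((\<forall>i\<in>voters n. b i = None) \<and> (\<forall>i\<in>voters n. top m u i = 1)) \<or>
    (\<exists>i0\<in>voters n. \<exists>w. b i0 = Some w \<and> (\<forall>i\<in>voters n. i \<noteq> i0 \<longrightarrow> b i = None)
       \<and> good_cand m n u w \<and> winner m n b = w \<and> W m n b = {w} \<and> top m u i0 = w)"
proof (cases "\<forall>i\<in>voters n. b i = None")
  case True
  have w1: "winner m n b = 1" using triv_winner[OF True] by blast
  have "\<forall>i\<in>voters n. top m u i = 1"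
  proof (intro ballI, rule ccontr)
    fix i assume i: "i \<in> voters n" and t: "top m u i \<noteq> 1"
    let ?t = "top m u i"
    have tc: "?t \<in> cands m" using topc[OF i] by blast
    have lt: "u i 1 < u i ?t" using topc[OF i] one_c t by metis
    have "\<forall>k\<in>voters n. (b(i := Some ?t)) k = (if k = i then Some ?t else None)" using True by auto
    then have wt: "winner m n (b(i := Some ?t)) = ?t" using single_winner[OF i tc] by blast
    have "Ut m n u eps i (b(i := Some ?t)) \<le> Ut m n u eps i b" by (rule dev[OF P i actSome[OF tc]])
    then have "real (u i ?t) \<le> real (u i 1) + eps" using True i w1 wt by (simp add: Ut_eq)
    then have "u i ?t \<le> u i 1" using nat_eps eps1 by blast
    then show False using lt by simp
  qed
  then show ?thesis using True by blast
next
  case False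
  then obtain i0 where i0: "i0 \<in> voters n" "b i0 \<noteq> None" by blast
  define w where "w = winner m n b"
  note wch = winner_char[OF m1, of n b, folded w_def]
  have wc: "w \<in> cands m" using wch by blast
  have vb: "valid_ballot m n b" using P by (simp add: PNE_def)
  have stepa: "\<forall>i\<in>voters n. \<forall>c. b i = Some c \<longrightarrow> c = w"
  proof (intro ballI allI impI, rule ccontr)
    fix i c assume i: "i \<in> voters n" and bi: "b i = Some c" and cw: "c \<noteq> w"
    let ?b' = "b(i := None)"
    have s': "\<And>d. sc n d ?b' = sc n d b - (if c = d then 1 else 0)"
      using sc_upd[OF i, of d b None for d] bi by simp
    have "winner m n ?b' = w"
    proof (rule winner_D[OF m1 wc])
      show "\<forall>d\<in>cands m. sc n d ?b' \<le> sc n w ?b'" using wch cw s' by (auto simp: w_def)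
      show "\<forall>d\<in>cands m. d < w \<longrightarrow> sc n d ?b' < sc n w ?b'" using wch cw s'
        by (auto simp: w_def)
    qed
    moreover have "Ut m n u eps i ?b' \<le> Ut m n u eps i b" by (rule dev[OF P i actNone])
    ultimately show False using bi eps0 by (simp add: Ut_eq w_def)
  qed
  obtain c0 where "b i0 = Some c0" using i0 by blast
  then have bi0: "b i0 = Some w" using stepa i0 by blast
  have others: "\<forall>i\<in>voters n. i \<noteq> i0 \<longrightarrow> b i = None"
  proof (intro ballI impI, rule ccontr)
    fix i assume i: "i \<in> voters n" "i \<noteq> i0" "b i \<noteq> None"
    then have bi: "b i = Some w" using stepa by auto
    let ?b' = "b(i0 := None)"
    have s': "\<And>d. sc n d ?b' = sc n d b - (if w = d then 1 else 0)"
      using sc_upd[OF i0(1), of d b None for d] bi0 by simp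
    have z: "\<And>d. d \<noteq> w \<Longrightarrow> sc n d b = 0"
    proof -
      fix d assume "d \<noteq> w"
      then have "{k \<in> voters n. b k = Some d} = {}" using stepa by auto
      then show "sc n d b = 0" by (simp add: sc_def)
    qed
    have "{i, i0} \<subseteq> {k \<in> voters n. b k = Some w}" using i i0 bi bi0 by auto
    then have "card {i, i0} \<le> sc n w b" unfolding sc_def by (intro card_mono) auto
    then have two: "sc n w b \<ge> 2" using i by simp
    have "winner m n ?b' = w"
      by (rule winner_D[OF m1 wc]) (use s' z two in auto)
    moreover have "Ut m n u eps i0 ?b' \<le> Ut m n u eps i0 b" by (rule dev[OF P i0(1) actNone])
    ultimately show False using bi0 eps0 by (simp add: Ut_eq w_def)
  qed
  have agree: "\<forall>i\<in>voters n. b i = (if i = i0 then Some w else None)" using others bi0 by auto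
  have Ww: "W m n b = {w}" using single_winner[OF i0(1) wc agree] by blast
  have wn1: "w \<noteq> 1"
  proof
    assume w1: "w = 1"
    let ?b' = "b(i0 := None)"
    have "\<forall>i\<in>voters n. ?b' i = None" using others by auto
    then have "winner m n ?b' = 1" using triv_winner by blast
    moreover have "Ut m n u eps i0 ?b' \<le> Ut m n u eps i0 b" by (rule dev[OF P i0(1) actNone])
    ultimately show False using bi0 eps0 w1 by (simp add: Ut_eq w_def)
  qed
  have topw: "top m u i0 = w"
  proof (rule ccontr)
    assume t: "top m u i0 \<noteq> w"
    let ?t = "top m u i0"
    have tc: "?t \<in> cands m" using topc[OF i0(1)] by blast
    have lt: "u i0 w < u i0 ?t" using topc[OF i0(1)] wc t by metis
    have "\<forall>k\<in>voters n. (b(i0 := Some ?t)) k = (if k = i0 then Some ?t else None)" using others by auto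
    then have wt: "winner m n (b(i0 := Some ?t)) = ?t" using single_winner[OF i0(1) tc] by blast
    have "Ut m n u eps i0 (b(i0 := Some ?t)) \<le> Ut m n u eps i0 b" by (rule dev[OF P i0(1) actSome[OF tc]])
    then have "u i0 ?t \<le> u i0 w" using bi0 wt by (simp add: Ut_eq w_def)
    then show False using lt by simp
  qed
  have good: "good_cand m n u w"
    unfolding good_cand_def
  proof (intro conjI ballI impI)
    show "w \<in> cands m" by fact
    show "1 < w" using wc wn1 by (simp add: cands_def)
    have "i0 \<in> {i \<in> voters n. truthful m u i = Some w}" using i0 topw by (simp add: truthful_def)
    then show "0 < sc n w (truthful m u)" unfolding sc_def by (metis (no_types, lifting) card_gt_0_iff empty_iff fin_v finite_subset mem_Collect_eq subsetI)
  next
    fix k i assume k: "k \<in> cands m" "k < w" and i: "i \<in> voters n"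
    show "u i k < u i w"
    proof (cases "i = i0")
      case True
      then show ?thesis using topc[OF i0(1)] topw k by auto
    next
      case ne: False
      have "\<forall>x\<in>voters n. (b(i := Some k)) x = (if x = i0 then Some w else if x = i then Some k else None)"
        using agree ne by auto
      then have "winner m n (b(i := Some k)) = min w k" using pair_winner[OF i0(1) i _ wc k(1)] ne by metis
      then have wk: "winner m n (b(i := Some k)) = k" using k by simp
      have "Ut m n u eps i (b(i := Some k)) \<le> Ut m n u eps i b" by (rule dev[OF P i actSome[OF k(1)]])
      then have "real (u i k) \<le> real (u i w) + eps" using wk agree ne i by (simp add: Ut_eq w_def)
      then have "u i k \<le> u i w" using nat_eps eps1 by blast
      moreover have "u i k \<noteq> u i w" using injc[OF i k(1) wc] k by simp
      ultimately show ?thesis by simp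
    qed
  qed
  show ?thesis using i0(1) bi0 others good Ww topw by (auto simp: w_def)
qed


lemma E1:
  assumes T: "\<forall>i\<in>voters n. top m u i = 1"
  shows "PNE m n u eps (\<lambda>i. None)"
  unfolding PNE_def
proof (intro conjI ballI)
  show "valid_ballot m n (\<lambda>i. None)" by (simp add: valid_ballot_def)
next
  fix i x assume i: "i \<in> voters n" and x: "x \<in> actions m"
  have w1: "winner m n (\<lambda>i. None) = 1" using triv_winner by simp
  show "Ut m n u eps i ((\<lambda>i. None)(i := x)) \<le> Ut m n u eps i (\<lambda>i. None)"
  proof (cases x)
    case None then show ?thesis by simp
  next
    case (Some c)
    then have c: "c \<in> cands m" using x by (auto simp: actions_def)
    have "\<forall>k\<in>voters n. ((\<lambda>i. None)(i := x)) k = (if k = i then Some c else None)" using Some by auto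
    then have wc: "winner m n ((\<lambda>i. None)(i := x)) = c" using single_winner[OF i c] by blast
    have "u i c \<le> u i 1" using topc[OF i] T i c by (metis less_imp_le order_refl)
    then show ?thesis using wc w1 Some eps0 by (simp add: Ut_eq)
  qed
qed

lemma good_voter: "good_cand m n u j \<Longrightarrow> \<exists>i\<in>voters n. top m u i = j"
proof -
  assume "good_cand m n u j"
  then have "sc n j (truthful m u) > 0" by (simp add: good_cand_def)
  then have "{i \<in> voters n. truthful m u i = Some j} \<noteq> {}" unfolding sc_def by (metis card.empty less_irrefl)
  then show ?thesis by (auto simp: truthful_def)
qed

lemma E2:
  assumes G: "good_cand m n u j"
  shows "\<exists>b. PNE m n u eps b"
proof -
  obtain i0 where i0: "i0 \<in> voters n" "top m u i0 = j" using good_voter[OF G] by blast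
  have jc: "j \<in> cands m" and j1: "1 < j" and pref: "\<forall>k\<in>cands m. k < j \<longrightarrow> (\<forall>i\<in>voters n. u i j > u i k)"
    using G by (auto simp: good_cand_def)
  define b where "b = (\<lambda>i. if i = i0 then Some j else None)"
  have wb: "winner m n b = j" using single_winner[OF i0(1) jc, of b] by (simp add: b_def)
  have "PNE m n u eps b"
    unfolding PNE_def
  proof (intro conjI ballI)
    show "valid_ballot m n b" using jc by (simp add: valid_ballot_def b_def)
  next
    fix i x assume i: "i \<in> voters n" and x: "x \<in> actions m"
    show "Ut m n u eps i (b(i := x)) \<le> Ut m n u eps i b"
    proof (cases "i = i0")
      case True
      show ?thesis
      proof (cases x)
        case None
        have "\<forall>k\<in>voters n. (b(i := x)) k = None" using None True by (auto simp: b_def)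
        then have w': "winner m n (b(i := x)) = 1" using triv_winner by blast
        have "u i 1 < u i j" using pref one_c j1 i by blast
        then have "real (u i 1) + 1 \<le> real (u i j)" by linarith
        then show ?thesis using w' wb None True eps1 by (simp add: Ut_eq b_def)
      next
        case (Some c)
        then have c: "c \<in> cands m" using x by (auto simp: actions_def)
        have "\<forall>k\<in>voters n. (b(i := x)) k = (if k = i then Some c else None)" using Some True by (auto simp: b_def)
        then have w': "winner m n (b(i := x)) = c" using single_winner[OF i c] by blast
        have "u i c \<le> u i j" using topc[OF i] i0 True c by (metis less_imp_le order_refl)
        then show ?thesis using w' wb Some True by (simp add: Ut_eq b_def)
      qed
    next
      case ne: False
      show ?thesis
      proof (cases x)
        case None
        have "b(i := x) = b" using None ne by (auto simp: b_def)
        then show ?thesis by simp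
      next
        case (Some c)
        then have c: "c \<in> cands m" using x by (auto simp: actions_def)
        have "\<forall>k\<in>voters n. (b(i := x)) k = (if k = i0 then Some j else if k = i then Some c else None)"
          using Some ne by (auto simp: b_def)
        then have w': "winner m n (b(i := x)) = min j c" using pair_winner[OF i0(1) i _ jc c] ne by metis
        have "u i (min j c) \<le> u i j" using pref c i by (cases "c < j") (auto simp: min_def less_imp_le)
        then show ?thesis using w' wb Some ne eps0 by (simp add: Ut_eq b_def)
      qed
    qed
  qed
  then show ?thesis by blast
qed

lemma good_unique: "good_cand m n u j \<Longrightarrow> good_cand m n u j' \<Longrightarrow> j = j'"
proof -
  have A: "False" if g: "good_cand m n u j" "good_cand m n u j'" "j < j'" for j j'
  proof -
    obtain i where i: "i \<in> voters n" "top m u i = j" using good_voter[OF g(1)] by blast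
    have "u i j < u i j'" using g i(1) by (auto simp: good_cand_def)
    moreover have "u i j' < u i j" using topc[OF i(1)] i g(2,3) by (auto simp: good_cand_def)
    ultimately show False by simp
  qed
  assume "good_cand m n u j" "good_cand m n u j'"
  then show "j = j'" using A[of j j'] A[of j' j] by (metis linorder_neqE_nat)
qed

end

theorem theorem1:
  fixes m n :: nat and u :: "nat \<Rightarrow> nat \<Rightarrow> nat" and eps :: real
  assumes "m \<ge> 1" and "n \<ge> 1"
    and "valid_profile m n u"
    and "0 < eps" and "eps < min (1 / real m) (1 / real n)"
  shows
    "(\<forall>b. PNE m n u eps b \<longrightarrow>
         card (W m n b) \<in> {1, m} \<and>
         (card (W m n b) = m \<longleftrightarrow>
            trivial_ballot n b \<and> (\<forall>i\<in>voters n. top m u i = 1)))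
   \<and> (\<forall>b. PNE m n u eps b \<longrightarrow> card {i \<in> voters n. b i \<noteq> None} \<le> 1)
   \<and> ((\<exists>b. PNE m n u eps b) \<longleftrightarrow>
         (\<forall>i\<in>voters n. top m u i = 1) \<or> (\<exists>j. good_cand m n u j))
   \<and> ((\<forall>i\<in>voters n. top m u i = 1) \<longrightarrow>
         (\<forall>b. PNE m n u eps b \<longrightarrow> winner m n b = 1))
   \<and> (\<forall>j j'. good_cand m n u j \<and> good_cand m n u j' \<longrightarrow> j = j')
   \<and> (\<forall>j. good_cand m n u j \<longrightarrow> (\<forall>b. PNE m n u eps b \<longrightarrow> winner m n b = j))"
proof -
  have m1: "m \<ge> 1" by fact
  have "1 / real m \<le> 1" using m1 by simp
  then have e1: "eps < 1" using assms(5) by linarith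
  note ctx = m1 assms(3) assms(4) e1
  note M = master[OF ctx] and TW = triv_winner[OF ctx] and SW = single_winner[OF ctx]
  note GU = good_unique[OF ctx] and GV = good_voter[OF ctx]
  have p1: "card (W m n b) \<in> {1, m} \<and> (card (W m n b) = m \<longleftrightarrow>
            trivial_ballot n b \<and> (\<forall>i\<in>voters n. top m u i = 1))" if P: "PNE m n u eps b" for b
  proof -
    from M[OF P] show ?thesis
    proof
      assume a: "(\<forall>i\<in>voters n. b i = None) \<and> (\<forall>i\<in>voters n. top m u i = 1)"
      then have "W m n b = cands m" using TW by blast
      then show ?thesis using a by (simp add: cands_def trivial_ballot_def)
    next
      assume "\<exists>i0\<in>voters n. \<exists>w. b i0 = Some w \<and> (\<forall>i\<in>voters n. i \<noteq> i0 \<longrightarrow> b i = None)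
       \<and> good_cand m n u w \<and> winner m n b = w \<and> W m n b = {w} \<and> top m u i0 = w"
      then obtain i0 w where a: "i0 \<in> voters n" "b i0 = Some w" "good_cand m n u w" "W m n b = {w}" by blast
      have "1 < w" "w \<le> m" using a(3) by (auto simp: good_cand_def cands_def)
      then have "m \<noteq> 1" by simp
      moreover have "\<not> trivial_ballot n b" using a by (auto simp: trivial_ballot_def)
      ultimately show ?thesis using a(4) by auto
    qed
  qed
  have p2: "card {i \<in> voters n. b i \<noteq> None} \<le> 1" if P: "PNE m n u eps b" for b
  proof -
    from M[OF P] show ?thesis
    proof
      assume a: "(\<forall>i\<in>voters n. b i = None) \<and> (\<forall>i\<in>voters n. top m u i = 1)"
      then have "{i \<in> voters n. b i \<noteq> None} = {}" by auto
      then show ?thesis by (simp only: card.empty)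
    next
      assume "\<exists>i0\<in>voters n. \<exists>w. b i0 = Some w \<and> (\<forall>i\<in>voters n. i \<noteq> i0 \<longrightarrow> b i = None)
       \<and> good_cand m n u w \<and> winner m n b = w \<and> W m n b = {w} \<and> top m u i0 = w"
      then obtain i0 w where a: "i0 \<in> voters n" "b i0 = Some w" "\<forall>i\<in>voters n. i \<noteq> i0 \<longrightarrow> b i = None" by blast
      then have "{i \<in> voters n. b i \<noteq> None} = {i0}" by auto
      then show ?thesis by simp
    qed
  qed
  have p4: "winner m n b = 1" if T: "\<forall>i\<in>voters n. top m u i = 1" and P: "PNE m n u eps b" for b
  proof -
    from M[OF P] show ?thesis
    proof
      assume a: "(\<forall>i\<in>voters n. b i = None) \<and> (\<forall>i\<in>voters n. top m u i = 1)"
      then show ?thesis using TW by blast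
    next
      assume "\<exists>i0\<in>voters n. \<exists>w. b i0 = Some w \<and> (\<forall>i\<in>voters n. i \<noteq> i0 \<longrightarrow> b i = None)
       \<and> good_cand m n u w \<and> winner m n b = w \<and> W m n b = {w} \<and> top m u i0 = w"
      then obtain i0 w where a: "i0 \<in> voters n" "good_cand m n u w" "top m u i0 = w" by blast
      then show ?thesis using T by (auto simp: good_cand_def)
    qed
  qed
  have p6: "winner m n b = j" if G: "good_cand m n u j" and P: "PNE m n u eps b" for b j
  proof -
    from M[OF P] show ?thesis
    proof
      assume a: "(\<forall>i\<in>voters n. b i = None) \<and> (\<forall>i\<in>voters n. top m u i = 1)"
      obtain i where "i \<in> voters n" "top m u i = j" using GV[OF G] by blast
      then show ?thesis using a G by (auto simp: good_cand_def)
    next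
      assume "\<exists>i0\<in>voters n. \<exists>w. b i0 = Some w \<and> (\<forall>i\<in>voters n. i \<noteq> i0 \<longrightarrow> b i = None)
       \<and> good_cand m n u w \<and> winner m n b = w \<and> W m n b = {w} \<and> top m u i0 = w"
      then obtain w where a: "good_cand m n u w" "winner m n b = w" by blast
      then show ?thesis using GU[OF G a(1)] by simp
    qed
  qed
  have p3: "(\<exists>b. PNE m n u eps b) \<longleftrightarrow> (\<forall>i\<in>voters n. top m u i = 1) \<or> (\<exists>j. good_cand m n u j)"
  proof
    assume "\<exists>b. PNE m n u eps b"
    then obtain b where P: "PNE m n u eps b" by blast
    from M[OF P] show "(\<forall>i\<in>voters n. top m u i = 1) \<or> (\<exists>j. good_cand m n u j)" by blast
  next
    assume "(\<forall>i\<in>voters n. top m u i = 1) \<or> (\<exists>j. good_cand m n u j)"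
    then show "\<exists>b. PNE m n u eps b" using E1[OF ctx] E2[OF ctx] by blast
  qed
  show ?thesis using p1 p2 p3 p4 p6 GU by blast
qed

end
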